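(* Let $\rho^s$ be a qubit state on $\mathbb{C}^2$ with $l_1$-norm coherence $\mathcal{C}_{l_1}(\rho^s)>\sqrt{1/2}$, and let $A$, $B$ be auxiliary qubits each prepared in $|0\rangle\langle 0|$. Then there exists an incoherent operation $\Lambda$ on $(\mathbb{C}^2)^{\otimes 3}$ such that $\Lambda(\rho^s\otimes|0\rangle\langle 0|^A\otimes|0\rangle\langle 0|^B)$ is a genuinely three-qubit nonlocal state.
   Context: Coherence is with respect to the computational basis; $\mathcal{C}_{l_1}(\rho)=\sum_{i\neq j}|\rho_{ij}|$. An incoherent operation is a completely positive trace-preserving map $\Lambda(\rho)=\sum_j K_j\rho K_j^\dagger$ whose Kraus operators map states diagonal in the computational basis to (unnormalized) diagonal states. For measurements $X,Y,Z$ by three parties with outcomes $x,y,z$, the correlations are Svetlichny local if $P(xyz|XYZ)=\sum_\lambda q_\lambda P_\lambda(xy|XY)P_\lambda(z|Z)+\sum_\mu q_\mu P_\mu(xz|XZ)P_\mu(y|Y)+\sum_\nu q_\nu P_\nu(yz|YZ)P_\nu(x|X)$ with $q_\lambda,q_\mu,q_\nu\geq 0$ summing to $1$. A three-qubit state is genuinely three-qubit nonlocal if for some choice of local measurements its correlations are not Svetlichny local. *)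

theory Defs
  imports Complex_Main
begin

text \<open>Finite-dimensional complex matrices are represented as functions
  nat => nat => complex; only entries with indices below the dimension n matter.
  Multi-qubit computational basis: index i of a tensor product of a d1- and a
  d2-dimensional system is (i div d2, i mod d2), i.e. the first factor is the most
  significant.\<close>

type_synonym cmat = "nat \<Rightarrow> nat \<Rightarrow> complex"

definition mmult :: "nat \<Rightarrow> cmat \<Rightarrow> cmat \<Rightarrow> cmat" where
  "mmult n A B = (\<lambda>i j. \<Sum>k<n. A i k * B k j)"

definition adj :: "cmat \<Rightarrow> cmat" where
  "adj A = (\<lambda>i j. cnj (A j i))"

definition idm :: cmat where
  "idm = (\<lambda>i j. if i = j then 1 else 0)"

definition mtrace :: "nat \<Rightarrow> cmat \<Rightarrow> complex" where
  "mtrace n A = (\<Sum>i<n. A i i)"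

definition kron :: "nat \<Rightarrow> cmat \<Rightarrow> cmat \<Rightarrow> cmat" where
  "kron d2 A B = (\<lambda>i j. A (i div d2) (j div d2) * B (i mod d2) (j mod d2))"

definition psd :: "nat \<Rightarrow> cmat \<Rightarrow> bool" where
  "psd n A \<longleftrightarrow> (\<forall>v :: nat \<Rightarrow> complex.
     Im (\<Sum>i<n. \<Sum>j<n. cnj (v i) * A i j * v j) = 0 \<and>
     Re (\<Sum>i<n. \<Sum>j<n. cnj (v i) * A i j * v j) \<ge> 0)"

definition density :: "nat \<Rightarrow> cmat \<Rightarrow> bool" where
  "density n \<rho> \<longleftrightarrow> psd n \<rho> \<and> mtrace n \<rho> = 1"

definition is_diag :: "nat \<Rightarrow> cmat \<Rightarrow> bool" where
  "is_diag n A \<longleftrightarrow> (\<forall>i<n. \<forall>j<n. i \<noteq> j \<longrightarrow> A i j = 0)"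

definition coh_l1 :: "nat \<Rightarrow> cmat \<Rightarrow> real" where
  "coh_l1 n \<rho> = (\<Sum>i<n. \<Sum>j<n. if i \<noteq> j then cmod (\<rho> i j) else 0)"

definition ket0bra0 :: cmat where
  "ket0bra0 = (\<lambda>i j. if i = 0 \<and> j = 0 then 1 else 0)"

definition kraus_apply :: "nat \<Rightarrow> cmat list \<Rightarrow> cmat \<Rightarrow> cmat" where
  "kraus_apply n Ks \<rho> = (\<lambda>i j. \<Sum>K\<leftarrow>Ks. mmult n (mmult n K \<rho>) (adj K) i j)"

definition cptp_kraus :: "nat \<Rightarrow> cmat list \<Rightarrow> bool" where
  "cptp_kraus n Ks \<longleftrightarrow>
     (\<forall>i<n. \<forall>j<n. (\<Sum>K\<leftarrow>Ks. mmult n (adj K) K i j) = idm i j)"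

definition incoherent_kraus :: "nat \<Rightarrow> cmat list \<Rightarrow> bool" where
  "incoherent_kraus n Ks \<longleftrightarrow> cptp_kraus n Ks \<and>
     (\<forall>K\<in>set Ks. \<forall>\<sigma>. density n \<sigma> \<and> is_diag n \<sigma> \<longrightarrow>
        is_diag n (mmult n (mmult n K \<sigma>) (adj K)))"

definition qubit_povms :: "nat set \<Rightarrow> nat set \<Rightarrow> (nat \<Rightarrow> nat \<Rightarrow> cmat) \<Rightarrow> bool" where
  "qubit_povms S Os E \<longleftrightarrow> (\<forall>X\<in>S.
     (\<forall>x\<in>Os. psd 2 (E X x)) \<and>
     (\<forall>i<2. \<forall>j<2. (\<Sum>x\<in>Os. E X x i j) = idm i j))"

definition qcorr :: "cmat \<Rightarrow> (nat \<Rightarrow> nat \<Rightarrow> cmat) \<Rightarrow> (nat \<Rightarrow> nat \<Rightarrow> cmat) \<Rightarrow>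
    (nat \<Rightarrow> nat \<Rightarrow> cmat) \<Rightarrow> nat \<Rightarrow> nat \<Rightarrow> nat \<Rightarrow> nat \<Rightarrow> nat \<Rightarrow> nat \<Rightarrow> real" where
  "qcorr \<rho> E1 E2 E3 x y z X Y Z =
     Re (mtrace 8 (mmult 8 \<rho> (kron 4 (E1 X x) (kron 2 (E2 Y y) (E3 Z z)))))"

definition cdist1 :: "nat set \<Rightarrow> nat set \<Rightarrow> (nat \<Rightarrow> nat \<Rightarrow> real) \<Rightarrow> bool" where
  "cdist1 S Os p \<longleftrightarrow> (\<forall>A\<in>S. (\<forall>a\<in>Os. p a A \<ge> 0) \<and> (\<Sum>a\<in>Os. p a A) = 1)"

definition cdist2 :: "nat set \<Rightarrow> nat set \<Rightarrow> nat set \<Rightarrow> nat set \<Rightarrow>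
    (nat \<Rightarrow> nat \<Rightarrow> nat \<Rightarrow> nat \<Rightarrow> real) \<Rightarrow> bool" where
  "cdist2 SA SB OA OB p \<longleftrightarrow> (\<forall>A\<in>SA. \<forall>B\<in>SB.
     (\<forall>a\<in>OA. \<forall>b\<in>OB. p a b A B \<ge> 0) \<and> (\<Sum>a\<in>OA. \<Sum>b\<in>OB. p a b A B) = 1)"

definition svetlichny_local :: "nat set \<Rightarrow> nat set \<Rightarrow> nat set \<Rightarrow> nat set \<Rightarrow> nat set \<Rightarrow> nat set \<Rightarrow>
    (nat \<Rightarrow> nat \<Rightarrow> nat \<Rightarrow> nat \<Rightarrow> nat \<Rightarrow> nat \<Rightarrow> real) \<Rightarrow> bool" where
  "svetlichny_local SX SY SZ OX OY OZ P \<longleftrightarrow>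
    (\<exists>(n1::nat) (n2::nat) (n3::nat) (q1::nat \<Rightarrow> real) (q2::nat \<Rightarrow> real) (q3::nat \<Rightarrow> real)
      pxy pz pxz py pyz px.
      (\<forall>l<n1. q1 l \<ge> 0 \<and> cdist2 SX SY OX OY (pxy l) \<and> cdist1 SZ OZ (pz l)) \<and>
      (\<forall>m<n2. q2 m \<ge> 0 \<and> cdist2 SX SZ OX OZ (pxz m) \<and> cdist1 SY OY (py m)) \<and>
      (\<forall>k<n3. q3 k \<ge> 0 \<and> cdist2 SY SZ OY OZ (pyz k) \<and> cdist1 SX OX (px k)) \<and>
      (\<Sum>l<n1. q1 l) + (\<Sum>m<n2. q2 m) + (\<Sum>k<n3. q3 k) = 1 \<and>
      (\<forall>X\<in>SX. \<forall>Y\<in>SY. \<forall>Z\<in>SZ. \<forall>x\<in>OX. \<forall>y\<in>OY. \<forall>z\<in>OZ.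
         P x y z X Y Z =
           (\<Sum>l<n1. q1 l * pxy l x y X Y * pz l z Z) +
           (\<Sum>m<n2. q2 m * pxz m x z X Z * py m y Y) +
           (\<Sum>k<n3. q3 k * pyz k y z Y Z * px k x X)))"

definition genuinely_3q_nonlocal :: "cmat \<Rightarrow> bool" where
  "genuinely_3q_nonlocal \<rho> \<longleftrightarrow>
    (\<exists>SX SY SZ OX OY OZ E1 E2 E3.
       finite SX \<and> finite SY \<and> finite SZ \<and> finite OX \<and> finite OY \<and> finite OZ \<and>
       qubit_povms SX OX E1 \<and> qubit_povms SY OY E2 \<and> qubit_povms SZ OZ E3 \<and>
       \<not> svetlichny_local SX SY SZ OX OY OZ (qcorr \<rho> E1 E2 E3))"

end

theory Submission
  imports Defs
begin


lemma sum2: "(\<Sum>i<(2::nat). f i) = f 0 + f 1"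
  by (simp add: eval_nat_numeral)

lemma sum8: "(\<Sum>i<(8::nat). f i) = f 0 + f 1 + f 2 + f 3 + f 4 + f 5 + f 6 + f 7"
  by (simp add: eval_nat_numeral)

lemma psd_herm:
  assumes "psd 2 A"
  shows "A 1 0 = cnj (A 0 1)" and "Im (A 0 0) = 0" and "Im (A 1 1) = 0"
proof -
  have q: "Im (\<Sum>i<2. \<Sum>j<2. cnj (v i) * A i j * v j) = 0" for v
    using assms unfolding psd_def by blast
  have a: "Im (A 0 0) = 0" using q[of "\<lambda>i. if i = 0 then 1 else 0"] by (simp add: sum2)
  have b: "Im (A 1 1) = 0" using q[of "\<lambda>i. if i = 1 then 1 else 0"] by (simp add: sum2)
  have c: "Im (A 0 1) + Im (A 1 0) = 0" using q[of "\<lambda>i. 1"] a b by (simp add: sum2)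
  have d: "Re (A 0 1) - Re (A 1 0) = 0" using q[of "\<lambda>i. if i = 0 then 1 else \<i>"] a b by (simp add: sum2)
  show "A 1 0 = cnj (A 0 1)" using c d by (simp add: complex_eq_iff)
  show "Im (A 0 0) = 0" "Im (A 1 1) = 0" by fact+
qed

definition sw :: "nat \<Rightarrow> nat" where
  "sw i = (if i = 4 then 7 else if i = 7 then 4 else i)"

definition Kp :: cmat where
  "Kp = (\<lambda>i j. if j = sw i then 1 else 0)"

lemma sw_lt: "i < 8 \<Longrightarrow> sw i < 8" by (simp add: sw_def)
lemma sw_inj: "sw i = sw j \<longleftrightarrow> i = j" by (auto simp: sw_def)

lemma mmult_Kp: "i < n \<Longrightarrow> sw i < n \<Longrightarrow> j < n \<Longrightarrow> sw j < n \<Longrightarrow>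
   mmult n (mmult n Kp \<sigma>) (adj Kp) i j = \<sigma> (sw i) (sw j)"
proof -
  assume h: "i < n" "sw i < n" "j < n" "sw j < n"
  have 1: "mmult n Kp \<sigma> i l = \<sigma> (sw i) l" for l
  proof -
    have "mmult n Kp \<sigma> i l = (\<Sum>k<n. if k = sw i then \<sigma> k l else 0)"
      unfolding mmult_def Kp_def by (rule sum.cong) auto
    then show ?thesis using h by simp
  qed
  have "mmult n (mmult n Kp \<sigma>) (adj Kp) i j = (\<Sum>k<n. \<sigma> (sw i) k * adj Kp k j)"
    by (simp only: mmult_def[of n "mmult n Kp \<sigma>"] 1)
  also have "\<dots> = (\<Sum>k<n. if k = sw j then \<sigma> (sw i) k else 0)"
    by (rule sum.cong) (auto simp: adj_def Kp_def)
  finally show ?thesis using h by simp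
qed

lemma Kp_incoh: "incoherent_kraus 8 [Kp]"
proof -
  have c: "cptp_kraus 8 [Kp]"
    unfolding cptp_kraus_def
  proof (intro allI impI)
    fix i j :: nat assume "i < 8" "j < 8"
    then show "(\<Sum>K\<leftarrow>[Kp]. mmult 8 (adj K) K i j) = idm i j"
      unfolding mmult_def adj_def Kp_def idm_def
      apply (simp add: sum8)
      apply (simp add: sw_def)
      done
  qed
  show ?thesis unfolding incoherent_kraus_def
  proof (intro conjI c ballI allI impI)
    fix K \<sigma> assume "K \<in> set [Kp]" "density 8 \<sigma> \<and> is_diag 8 \<sigma>"
    then show "is_diag 8 (mmult 8 (mmult 8 K \<sigma>) (adj K))"
      unfolding is_diag_def using mmult_Kp sw_lt sw_inj by auto
  qed
qed



definition rs :: "nat \<Rightarrow> real" where "rs x = (if x = 0 then 1 else -1)"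
definition sg3 :: "nat \<Rightarrow> real" where "sg3 k = (if k \<le> 1 then 1 else -1)"

definition Sv :: "(nat \<Rightarrow> nat \<Rightarrow> nat \<Rightarrow> nat \<Rightarrow> nat \<Rightarrow> nat \<Rightarrow> real) \<Rightarrow> real" where
  "Sv P = (\<Sum>X\<in>{0,1}. \<Sum>Y\<in>{0,1}. \<Sum>Z\<in>{0,1}. \<Sum>x\<in>{0,1}. \<Sum>y\<in>{0,1}. \<Sum>z\<in>{0,1}.
      sg3 (X+Y+Z) * (rs x * rs y * rs z) * P x y z X Y Z)"

lemma Sv_add: "Sv (\<lambda>x y z X Y Z. P x y z X Y Z + Q x y z X Y Z) = Sv P + Sv Q"
  unfolding Sv_def by (simp add: distrib_left sum.distrib)

lemma Sv_scale: "Sv (\<lambda>x y z X Y Z. q * P x y z X Y Z) = q * Sv P"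
  unfolding Sv_def sum_distrib_left by (intro sum.cong refl) (simp add: mult_ac)

lemma Sv_zero: "Sv (\<lambda>x y z X Y Z. 0) = 0"
  unfolding Sv_def by simp

lemma Sv_sum: "finite L \<Longrightarrow> Sv (\<lambda>x y z X Y Z. \<Sum>l\<in>L. g l x y z X Y Z) = (\<Sum>l\<in>L. Sv (g l))"
proof (induction L rule: finite_induct)
  case empty then show ?case using Sv_zero by simp
next
  case (insert a L)
  then show ?case using Sv_add[of "g a" "\<lambda>x y z X Y Z. \<Sum>l\<in>L. g l x y z X Y Z"] by simp
qed

lemma Sv_cong: "(\<And>x y z X Y Z. x \<in> {0,1} \<Longrightarrow> y \<in> {0,1} \<Longrightarrow> z \<in> {0,1} \<Longrightarrow>
   X \<in> {0,1} \<Longrightarrow> Y \<in> {0,1} \<Longrightarrow> Z \<in> {0,1} \<Longrightarrow> P x y z X Y Z = Q x y z X Y Z) \<Longrightarrow> Sv P = Sv Q"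
  unfolding Sv_def by (intro sum.cong refl) auto

lemma core:
  fixes e :: "nat \<Rightarrow> nat \<Rightarrow> real" and f :: "nat \<Rightarrow> real"
  assumes "\<And>a b. a \<in> {0,1} \<Longrightarrow> b \<in> {0,1} \<Longrightarrow> \<bar>e a b\<bar> \<le> 1"
    and "\<And>c. c \<in> {0,1} \<Longrightarrow> \<bar>f c\<bar> \<le> 1"
  shows "f 0 * (e 0 0 + e 0 1 + e 1 0 - e 1 1) + f 1 * (e 0 0 - e 0 1 - e 1 0 - e 1 1) \<le> 4"
proof -
  let ?A = "e 0 0 + e 0 1 + e 1 0 - e 1 1" and ?B = "e 0 0 - e 0 1 - e 1 0 - e 1 1"
  have f0: "\<bar>f 0\<bar> \<le> 1" and f1: "\<bar>f 1\<bar> \<le> 1" using assms(2) by auto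
  have e: "\<bar>e 0 0\<bar> \<le> 1" "\<bar>e 0 1\<bar> \<le> 1" "\<bar>e 1 0\<bar> \<le> 1" "\<bar>e 1 1\<bar> \<le> 1"
    using assms(1) by auto
  have "f 0 * ?A \<le> \<bar>?A\<bar>"
  proof -
    have "f 0 * ?A \<le> \<bar>f 0 * ?A\<bar>" by simp
    also have "\<dots> = \<bar>f 0\<bar> * \<bar>?A\<bar>" by (simp add: abs_mult)
    also have "\<dots> \<le> 1 * \<bar>?A\<bar>" by (rule mult_right_mono[OF f0]) simp
    finally show ?thesis by simp
  qed
  moreover have "f 1 * ?B \<le> \<bar>?B\<bar>"
  proof -
    have "f 1 * ?B \<le> \<bar>f 1 * ?B\<bar>" by simp
    also have "\<dots> = \<bar>f 1\<bar> * \<bar>?B\<bar>" by (simp add: abs_mult)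
    also have "\<dots> \<le> 1 * \<bar>?B\<bar>" by (rule mult_right_mono[OF f1]) simp
    finally show ?thesis by simp
  qed
  moreover have "\<bar>?A\<bar> + \<bar>?B\<bar> \<le> 4" using e by (smt (verit))
  ultimately show ?thesis by linarith
qed

definition E2 :: "(nat \<Rightarrow> nat \<Rightarrow> nat \<Rightarrow> nat \<Rightarrow> real) \<Rightarrow> nat \<Rightarrow> nat \<Rightarrow> real" where
  "E2 p X Y = (\<Sum>x\<in>{0,1}. \<Sum>y\<in>{0,1}. rs x * rs y * p x y X Y)"
definition E1 :: "(nat \<Rightarrow> nat \<Rightarrow> real) \<Rightarrow> nat \<Rightarrow> real" where
  "E1 p Z = (\<Sum>z\<in>{0,1}. rs z * p z Z)"

lemma E2_bound: "cdist2 {0,1} {0,1} {0,1} {0,1} p \<Longrightarrow> X \<in> {0,1} \<Longrightarrow> Y \<in> {0,1} \<Longrightarrow> \<bar>E2 p X Y\<bar> \<le> 1"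
  unfolding cdist2_def E2_def
  apply (drule bspec[of _ _ X], assumption)
  apply (drule bspec[of _ _ Y], assumption)
  apply (simp add: abs_if rs_def)
  done

lemma E1_bound: "cdist1 {0,1} {0,1} p \<Longrightarrow> Z \<in> {0,1} \<Longrightarrow> \<bar>E1 p Z\<bar> \<le> 1"
  unfolding cdist1_def E1_def
  apply (drule bspec[of _ _ Z], assumption)
  apply (simp add: abs_if rs_def)
  done

lemma type1: "cdist2 {0,1} {0,1} {0,1} {0,1} p \<Longrightarrow> cdist1 {0,1} {0,1} q \<Longrightarrow>
  Sv (\<lambda>x y z X Y Z. p x y X Y * q z Z) \<le> 4"
proof -
  assume a: "cdist2 {0,1} {0,1} {0,1} {0,1} p" "cdist1 {0,1} {0,1} q"
  have inner: "(\<Sum>x\<in>{0,1}. \<Sum>y\<in>{0,1}. \<Sum>z\<in>{0,1}. sg3 (X+Y+Z) * (rs x * rs y * rs z) * (p x y X Y * q z Z))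
     = sg3 (X+Y+Z) * (E2 p X Y * E1 q Z)" for X Y Z
    by (simp add: E1_def E2_def rs_def algebra_simps)
  have "Sv (\<lambda>x y z X Y Z. p x y X Y * q z Z) =
     (\<Sum>X\<in>{0,1}. \<Sum>Y\<in>{0,1}. \<Sum>Z\<in>{0,1}. sg3 (X+Y+Z) * (E2 p X Y * E1 q Z))"
    unfolding Sv_def inner by (rule refl)
  also have "\<dots> = E1 q 0 * (E2 p 0 0 + E2 p 0 1 + E2 p 1 0 - E2 p 1 1) + E1 q 1 * (E2 p 0 0 - E2 p 0 1 - E2 p 1 0 - E2 p 1 1)"
    by (simp add: sg3_def algebra_simps)
  also have "\<dots> \<le> 4"
  proof (rule core)
    fix a b :: nat assume "a \<in> {0,1}" "b \<in> {0,1}"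
    then show "\<bar>E2 p a b\<bar> \<le> 1" by (rule E2_bound[OF a(1)])
  next
    fix c :: nat assume "c \<in> {0,1}"
    then show "\<bar>E1 q c\<bar> \<le> 1" by (rule E1_bound[OF a(2)])
  qed
  finally show ?thesis .
qed

lemma type2: "cdist2 {0,1} {0,1} {0,1} {0,1} p \<Longrightarrow> cdist1 {0,1} {0,1} q \<Longrightarrow>
  Sv (\<lambda>x y z X Y Z. p x z X Z * q y Y) \<le> 4"
proof -
  assume a: "cdist2 {0,1} {0,1} {0,1} {0,1} p" "cdist1 {0,1} {0,1} q"
  have inner: "(\<Sum>x\<in>{0,1}. \<Sum>y\<in>{0,1}. \<Sum>z\<in>{0,1}. sg3 (X+Y+Z) * (rs x * rs y * rs z) * (p x z X Z * q y Y))
     = sg3 (X+Y+Z) * (E2 p X Z * E1 q Y)" for X Y Z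
    by (simp add: E1_def E2_def rs_def algebra_simps)
  have "Sv (\<lambda>x y z X Y Z. p x z X Z * q y Y) =
     (\<Sum>X\<in>{0,1}. \<Sum>Y\<in>{0,1}. \<Sum>Z\<in>{0,1}. sg3 (X+Y+Z) * (E2 p X Z * E1 q Y))"
    unfolding Sv_def inner by (rule refl)
  also have "\<dots> = E1 q 0 * (E2 p 0 0 + E2 p 0 1 + E2 p 1 0 - E2 p 1 1) + E1 q 1 * (E2 p 0 0 - E2 p 0 1 - E2 p 1 0 - E2 p 1 1)"
    by (simp add: sg3_def algebra_simps)
  also have "\<dots> \<le> 4"
  proof (rule core)
    fix a b :: nat assume "a \<in> {0,1}" "b \<in> {0,1}"
    then show "\<bar>E2 p a b\<bar> \<le> 1" by (rule E2_bound[OF a(1)])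
  next
    fix c :: nat assume "c \<in> {0,1}"
    then show "\<bar>E1 q c\<bar> \<le> 1" by (rule E1_bound[OF a(2)])
  qed
  finally show ?thesis .
qed

lemma type3: "cdist2 {0,1} {0,1} {0,1} {0,1} p \<Longrightarrow> cdist1 {0,1} {0,1} q \<Longrightarrow>
  Sv (\<lambda>x y z X Y Z. p y z Y Z * q x X) \<le> 4"
proof -
  assume a: "cdist2 {0,1} {0,1} {0,1} {0,1} p" "cdist1 {0,1} {0,1} q"
  have inner: "(\<Sum>x\<in>{0,1}. \<Sum>y\<in>{0,1}. \<Sum>z\<in>{0,1}. sg3 (X+Y+Z) * (rs x * rs y * rs z) * (p y z Y Z * q x X))
     = sg3 (X+Y+Z) * (E2 p Y Z * E1 q X)" for X Y Z
    by (simp add: E1_def E2_def rs_def algebra_simps)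
  have "Sv (\<lambda>x y z X Y Z. p y z Y Z * q x X) =
     (\<Sum>X\<in>{0,1}. \<Sum>Y\<in>{0,1}. \<Sum>Z\<in>{0,1}. sg3 (X+Y+Z) * (E2 p Y Z * E1 q X))"
    unfolding Sv_def inner by (rule refl)
  also have "\<dots> = E1 q 0 * (E2 p 0 0 + E2 p 0 1 + E2 p 1 0 - E2 p 1 1) + E1 q 1 * (E2 p 0 0 - E2 p 0 1 - E2 p 1 0 - E2 p 1 1)"
    by (simp add: sg3_def algebra_simps)
  also have "\<dots> \<le> 4"
  proof (rule core)
    fix a b :: nat assume "a \<in> {0,1}" "b \<in> {0,1}"
    then show "\<bar>E2 p a b\<bar> \<le> 1" by (rule E2_bound[OF a(1)])
  next
    fix c :: nat assume "c \<in> {0,1}"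
    then show "\<bar>E1 q c\<bar> \<le> 1" by (rule E1_bound[OF a(2)])
  qed
  finally show ?thesis .
qed

lemma local_bound:
  assumes "svetlichny_local {0,1} {0,1} {0,1} {0,1} {0,1} {0,1} P"
  shows "Sv P \<le> 4"
proof -
  from assms obtain n1 n2 n3 :: nat and q1 q2 q3 :: "nat \<Rightarrow> real"
    and pxy pxz pyz :: "nat \<Rightarrow> nat \<Rightarrow> nat \<Rightarrow> nat \<Rightarrow> nat \<Rightarrow> real"
    and pz py px :: "nat \<Rightarrow> nat \<Rightarrow> nat \<Rightarrow> real" where
    h1: "\<forall>l<n1. q1 l \<ge> 0 \<and> cdist2 {0,1} {0,1} {0,1} {0,1} (pxy l) \<and> cdist1 {0,1} {0,1} (pz l)" and
    h2: "\<forall>m<n2. q2 m \<ge> 0 \<and> cdist2 {0,1} {0,1} {0,1} {0,1} (pxz m) \<and> cdist1 {0,1} {0,1} (py m)" and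
    h3: "\<forall>k<n3. q3 k \<ge> 0 \<and> cdist2 {0,1} {0,1} {0,1} {0,1} (pyz k) \<and> cdist1 {0,1} {0,1} (px k)" and
    hs: "(\<Sum>l<n1. q1 l) + (\<Sum>m<n2. q2 m) + (\<Sum>k<n3. q3 k) = 1" and
    heq: "\<forall>X\<in>{0,1}. \<forall>Y\<in>{0,1}. \<forall>Z\<in>{0,1}. \<forall>x\<in>{0,1}. \<forall>y\<in>{0,1}. \<forall>z\<in>{0,1}.
         P x y z X Y Z =
           (\<Sum>l<n1. q1 l * pxy l x y X Y * pz l z Z) +
           (\<Sum>m<n2. q2 m * pxz m x z X Z * py m y Y) +
           (\<Sum>k<n3. q3 k * pyz k y z Y Z * px k x X)"
    using assms unfolding svetlichny_local_def by (elim exE conjE) (rule that)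
  have "Sv P = Sv (\<lambda>x y z X Y Z. (\<Sum>l<n1. q1 l * pxy l x y X Y * pz l z Z) +
           (\<Sum>m<n2. q2 m * pxz m x z X Z * py m y Y) +
           (\<Sum>k<n3. q3 k * pyz k y z Y Z * px k x X))"
  proof (rule Sv_cong)
    fix x y z X Y Z :: nat
    assume "x \<in> {0,1}" "y \<in> {0,1}" "z \<in> {0,1}" "X \<in> {0,1}" "Y \<in> {0,1}" "Z \<in> {0,1}"
    then show "P x y z X Y Z = (\<Sum>l<n1. q1 l * pxy l x y X Y * pz l z Z) +
           (\<Sum>m<n2. q2 m * pxz m x z X Z * py m y Y) +
           (\<Sum>k<n3. q3 k * pyz k y z Y Z * px k x X)"
      using heq by blast
  qed
  also have "\<dots> = (\<Sum>l<n1. q1 l * Sv (\<lambda>x y z X Y Z. pxy l x y X Y * pz l z Z)) +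
      (\<Sum>m<n2. q2 m * Sv (\<lambda>x y z X Y Z. pxz m x z X Z * py m y Y)) +
      (\<Sum>k<n3. q3 k * Sv (\<lambda>x y z X Y Z. pyz k y z Y Z * px k x X))"
    by (simp add: Sv_add Sv_sum Sv_scale mult.assoc)
  also have "\<dots> \<le> (\<Sum>l<n1. q1 l * 4) + (\<Sum>m<n2. q2 m * 4) + (\<Sum>k<n3. q3 k * 4)"
  proof (intro add_mono sum_mono)
    fix l assume "l \<in> {..<n1}" then show "q1 l * Sv (\<lambda>x y z X Y Z. pxy l x y X Y * pz l z Z) \<le> q1 l * 4"
      using h1 type1 by (simp add: mult_left_mono)
  next
    fix l assume "l \<in> {..<n2}" then show "q2 l * Sv (\<lambda>x y z X Y Z. pxz l x z X Z * py l y Y) \<le> q2 l * 4"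
      using h2 type2 by (simp add: mult_left_mono)
  next
    fix l assume "l \<in> {..<n3}" then show "q3 l * Sv (\<lambda>x y z X Y Z. pyz l y z Y Z * px l x X) \<le> q3 l * 4"
      using h3 type3 by (simp add: mult_left_mono)
  qed
  also have "\<dots> = 4" using hs by (simp add: sum_distrib_right[symmetric] algebra_simps)
  finally show ?thesis .
qed




definition Emat :: "complex \<Rightarrow> nat \<Rightarrow> cmat" where
  "Emat w x = (\<lambda>i j. if i = j then 1/2 else if i = 0 then of_real (rs x) * w / 2
                else of_real (rs x) * cnj w / 2)"

lemma psd2:
  assumes "A 0 0 = 1/2" "A 1 1 = 1/2" "A 1 0 = cnj (A 0 1)" "cmod (A 0 1) \<le> 1/2"
  shows "psd 2 A"
  unfolding psd_def
proof (intro allI conjI)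
  fix v :: "nat \<Rightarrow> complex"
  define a where "a = v 0"
  define b where "b = v 1"
  define z where "z = A 0 1"
  define t where "t = cnj a * z * b"
  have ct: "cnj t = cnj b * cnj z * a" unfolding t_def by simp
  have aa: "cnj a * a = complex_of_real ((cmod a)^2)" by (metis complex_norm_square mult.commute)
  have bb: "cnj b * b = complex_of_real ((cmod b)^2)" by (metis complex_norm_square mult.commute)
  have "(\<Sum>i<2. \<Sum>j<2. cnj (v i) * A i j * v j) = (cnj a * a) / 2 + (cnj b * b) / 2 + (t + cnj t)"
  proof -
    have s: "(\<Sum>i<2. \<Sum>j<2. g i j) = g 0 0 + g 0 1 + g 1 0 + g 1 (1::nat)" for g :: "nat \<Rightarrow> nat \<Rightarrow> complex"
      by (simp add: sum2)
    show ?thesis unfolding s assms(1,2,3) a_def b_def ct t_def z_def by (simp add: algebra_simps)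
  qed
  also have "\<dots> = complex_of_real ((cmod a)^2/2 + (cmod b)^2/2 + 2 * Re t)"
    unfolding aa bb complex_add_cnj by simp
  finally have form: "(\<Sum>i<2. \<Sum>j<2. cnj (v i) * A i j * v j) =
     complex_of_real ((cmod a)^2/2 + (cmod b)^2/2 + 2 * Re t)" .
  show "Im (\<Sum>i<2. \<Sum>j<2. cnj (v i) * A i j * v j) = 0" unfolding form by simp
  have r1: "- Re t \<le> cmod t" using abs_Re_le_cmod[of t] by linarith
  have r2: "cmod t = cmod a * cmod z * cmod b" unfolding t_def by (simp add: norm_mult)
  have r3: "cmod a * cmod z * cmod b \<le> cmod a * (1/2) * cmod b"
    using assms(4) unfolding z_def by (intro mult_right_mono mult_left_mono) auto
  have r4: "0 \<le> (cmod a - cmod b)^2" by simp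
  have r5: "(cmod a - cmod b)^2 = (cmod a)^2 - 2 * cmod a * cmod b + (cmod b)^2"
    by (simp add: power2_diff)
  show "0 \<le> Re (\<Sum>i<2. \<Sum>j<2. cnj (v i) * A i j * v j)" unfolding form
    using r1 r2 r3 r4 r5 by simp
qed

lemma Emat_psd: "cmod w = 1 \<Longrightarrow> psd 2 (Emat w x)"
  by (rule psd2) (auto simp: Emat_def rs_def norm_mult norm_divide)

lemma Emat_povm: "(\<And>X. cmod (wv X) = 1) \<Longrightarrow> qubit_povms {0,1} {0,1} (\<lambda>X x. Emat (wv X) x)"
  unfolding qubit_povms_def
proof (intro ballI conjI allI impI)
  fix X x assume "(\<And>X. cmod (wv X) = 1)"
  then show "psd 2 (Emat (wv X) x)" by (rule Emat_psd)
next
  fix X i j :: nat assume "i < 2" "j < 2"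
  then have "i = 0 \<or> i = 1" "j = 0 \<or> j = 1" by auto
  then show "(\<Sum>x\<in>{0,1}. Emat (wv X) x i j) = idm i j"
    by (auto simp: Emat_def rs_def idm_def)
qed

definition rho0 :: "cmat \<Rightarrow> cmat" where
  "rho0 \<rho>s = kron 4 \<rho>s (kron 2 ket0bra0 ket0bra0)"

lemma rho'_eq: "i < 8 \<Longrightarrow> j < 8 \<Longrightarrow> kraus_apply 8 [Kp] \<rho> i j = \<rho> (sw i) (sw j)"
  unfolding kraus_apply_def using mmult_Kp[of i 8 j] sw_lt by simp

lemma trace_val:
  "mtrace 8 (mmult 8 (kraus_apply 8 [Kp] (kron 4 \<rho>s (kron 2 ket0bra0 ket0bra0))) M) =
     \<rho>s 0 0 * M 0 0 + \<rho>s 0 1 * M 7 0 + \<rho>s 1 0 * M 0 7 + \<rho>s 1 1 * M 7 7"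
  unfolding mtrace_def mmult_def
  by (simp add: sum8 rho'_eq sw_def kron_def ket0bra0_def)


lemma Mvals:
  fixes w1 w2 w3 :: complex and x y z :: nat
  defines "M \<equiv> kron 4 (Emat w1 x) (kron 2 (Emat w2 y) (Emat w3 z))"
  shows "M 0 0 = 1/8" "M 7 7 = 1/8"
    "M 7 0 = complex_of_real (rs x * rs y * rs z / 8) * cnj (w1 * w2 * w3)"
    "M 0 7 = complex_of_real (rs x * rs y * rs z / 8) * (w1 * w2 * w3)"
  unfolding M_def kron_def Emat_def by (simp_all add: algebra_simps)

lemma qcorr_val:
  assumes h10: "\<rho>s 1 0 = cnj (\<rho>s 0 1)" and htr: "Re (\<rho>s 0 0) + Re (\<rho>s 1 1) = 1"
  shows "qcorr (kraus_apply 8 [Kp] (kron 4 \<rho>s (kron 2 ket0bra0 ket0bra0)))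
     (\<lambda>X x. Emat (w1 X) x) (\<lambda>Y y. Emat (w2 Y) y) (\<lambda>Z z. Emat (w3 Z) z) x y z X Y Z
     = 1/8 + rs x * rs y * rs z * Re (\<rho>s 0 1 * cnj (w1 X * w2 Y * w3 Z)) / 4"
proof -
  define W where "W = w1 X * w2 Y * w3 Z"
  define c where "c = \<rho>s 0 1"
  define r where "r = rs x * rs y * rs z"
  have "mtrace 8 (mmult 8 (kraus_apply 8 [Kp] (kron 4 \<rho>s (kron 2 ket0bra0 ket0bra0)))
      (kron 4 (Emat (w1 X) x) (kron 2 (Emat (w2 Y) y) (Emat (w3 Z) z)))) =
      \<rho>s 0 0 * (1/8) + c * (complex_of_real (r/8) * cnj W) + cnj c * (complex_of_real (r/8) * W) + \<rho>s 1 1 * (1/8)"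
    unfolding trace_val Mvals W_def c_def r_def h10 by simp
  also have "\<dots> = \<rho>s 0 0 * (1/8) + \<rho>s 1 1 * (1/8) + complex_of_real (r/8) * (c * cnj W + cnj (c * cnj W))"
    by (simp add: algebra_simps)
  also have "\<dots> = \<rho>s 0 0 * (1/8) + \<rho>s 1 1 * (1/8) + complex_of_real (r/8 * (2 * Re (c * cnj W)))"
    unfolding complex_add_cnj by simp
  finally have e: "mtrace 8 (mmult 8 (kraus_apply 8 [Kp] (kron 4 \<rho>s (kron 2 ket0bra0 ket0bra0)))
      (kron 4 (Emat (w1 X) x) (kron 2 (Emat (w2 Y) y) (Emat (w3 Z) z)))) =
      \<rho>s 0 0 * (1/8) + \<rho>s 1 1 * (1/8) + complex_of_real (r/8 * (2 * Re (c * cnj W)))" .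
  have fin: "Re (\<rho>s 0 0 * (1/8) + \<rho>s 1 1 * (1/8) + complex_of_real (r/8 * (2 * R))) = 1/8 + r * R / 4"
    for R :: real
  proof -
    have "Re (\<rho>s 0 0 * (1/8) + \<rho>s 1 1 * (1/8) + complex_of_real (r/8 * (2 * R))) =
       (Re (\<rho>s 0 0) + Re (\<rho>s 1 1)) / 8 + r * R / 4" by (simp add: field_simps)
    then show ?thesis unfolding htr by simp
  qed
  show ?thesis unfolding qcorr_def e fin unfolding W_def c_def r_def by (rule refl)
qed

definition alpha :: "nat \<Rightarrow> complex" where "alpha X = (if X = 0 then 1 + \<i> else 1 - \<i>)"
definition beta :: "nat \<Rightarrow> complex" where "beta Y = (if Y = 0 then 1 else - \<i>)"
definition wA :: "complex \<Rightarrow> nat \<Rightarrow> complex" where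
  "wA u X = u * alpha X / complex_of_real (sqrt 2)"

lemma cmod_alpha: "cmod (alpha X) = sqrt 2"
  by (simp add: alpha_def cmod_def)

lemma cmod_beta: "cmod (beta Y) = 1"
  by (simp add: beta_def)

lemma cmod_wA: "cmod u = 1 \<Longrightarrow> cmod (wA u X) = 1"
  by (simp add: wA_def norm_mult norm_divide cmod_alpha)

lemma Re_abb: "X \<in> {0,1} \<Longrightarrow> Y \<in> {0,1} \<Longrightarrow> Z \<in> {0,1} \<Longrightarrow>
   Re (cnj (alpha X * beta Y * beta Z)) = sg3 (X+Y+Z)"
  by (auto simp: alpha_def beta_def sg3_def)

lemma Re_val:
  fixes c :: complex
  assumes "cmod c > 0" "X \<in> {0,1}" "Y \<in> {0,1}" "Z \<in> {0,1}"
  shows "Re (c * cnj (wA (c / complex_of_real (cmod c)) X * beta Y * beta Z)) = cmod c * sg3 (X+Y+Z) / sqrt 2"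
proof -
  have cc: "c * cnj c = complex_of_real ((cmod c)^2)" by (metis complex_norm_square)
  have "c * cnj (wA (c / complex_of_real (cmod c)) X * beta Y * beta Z) =
      (c * cnj c) / complex_of_real (cmod c) / complex_of_real (sqrt 2) * cnj (alpha X * beta Y * beta Z)"
    by (simp add: wA_def field_simps)
  also have "\<dots> = complex_of_real (cmod c / sqrt 2) * cnj (alpha X * beta Y * beta Z)"
    unfolding cc using assms(1) by (simp add: power2_eq_square field_simps)
  finally show ?thesis using Re_abb[OF assms(2-4)] by simp
qed

lemma Svq: "Sv (\<lambda>x y z X Y Z. 1/8 + rs x * rs y * rs z * (K * sg3 (X+Y+Z)) / 4) = 16 * K"
  by (simp add: Sv_def rs_def sg3_def algebra_simps)

theorem theorem5:
  fixes \<rho>s :: cmat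
  assumes "density 2 \<rho>s"
    and "coh_l1 2 \<rho>s > sqrt (1/2)"
  shows "\<exists>Ks. incoherent_kraus 8 Ks \<and>
           genuinely_3q_nonlocal (kraus_apply 8 Ks (kron 4 \<rho>s (kron 2 ket0bra0 ket0bra0)))"
proof -
  have psd: "psd 2 \<rho>s" and tr: "mtrace 2 \<rho>s = 1" using assms(1) unfolding density_def by auto
  have h10: "\<rho>s 1 0 = cnj (\<rho>s 0 1)" using psd_herm(1)[OF psd] .
  have htr: "Re (\<rho>s 0 0) + Re (\<rho>s 1 1) = 1"
  proof -
    have "\<rho>s 0 0 + \<rho>s 1 1 = 1" using tr unfolding mtrace_def by (simp add: sum2)
    then show ?thesis by (metis plus_complex.sel(1) one_complex.sel(1))
  qed
  define c where "c = \<rho>s 0 1"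
  have coh: "coh_l1 2 \<rho>s = 2 * cmod c"
  proof -
    have h10': "\<rho>s (Suc 0) 0 = cnj (\<rho>s 0 (Suc 0))" using h10 by simp
    show ?thesis unfolding coh_l1_def c_def by (simp add: sum2 h10 h10')
  qed
  have s2: "sqrt (1/2) > (0::real)" by simp
  have cpos: "cmod c > 0" using assms(2) coh s2 by linarith
  define u where "u = c / complex_of_real (cmod c)"
  have u1: "cmod u = 1" using cpos unfolding u_def by (simp add: norm_divide)
  define \<rho>' where "\<rho>' = kraus_apply 8 [Kp] (kron 4 \<rho>s (kron 2 ket0bra0 ket0bra0))"
  define E1 where "E1 = (\<lambda>X x. Emat (wA u X) x)"
  define E2 where "E2 = (\<lambda>Y y. Emat (beta Y) y)"
  have qv: "Sv (qcorr \<rho>' E1 E2 E2) = 16 * (cmod c / sqrt 2)"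
  proof -
    have "Sv (qcorr \<rho>' E1 E2 E2) =
       Sv (\<lambda>x y z X Y Z. 1/8 + rs x * rs y * rs z * ((cmod c / sqrt 2) * sg3 (X+Y+Z)) / 4)"
    proof (rule Sv_cong)
      fix x y z X Y Z :: nat
      assume "x \<in> {0,1}" "y \<in> {0,1}" "z \<in> {0,1}" "X \<in> {0,1}" "Y \<in> {0,1}" "Z \<in> {0,1}"
      then show "qcorr \<rho>' E1 E2 E2 x y z X Y Z =
          1/8 + rs x * rs y * rs z * ((cmod c / sqrt 2) * sg3 (X+Y+Z)) / 4"
        unfolding \<rho>'_def E1_def E2_def qcorr_val[OF h10 htr] c_def[symmetric] u_def
        using Re_val[OF cpos] by simp
    qed
    also have "\<dots> = 16 * (cmod c / sqrt 2)" by (rule Svq)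
    finally show ?thesis .
  qed
  have gt: "16 * (cmod c / sqrt 2) > 4"
  proof -
    have i: "1 / sqrt 2 = sqrt (1/2)" by (simp add: real_sqrt_divide)
    have "16 * (cmod c / sqrt 2) = 8 * (2 * cmod c) * sqrt (1/2)" using i by (simp add: field_simps)
    also have "\<dots> > 8 * sqrt (1/2) * sqrt (1/2)" using assms(2) coh s2 by simp
    also have "8 * sqrt (1/2) * sqrt (1/2) = (4::real)" by (simp add: mult.assoc)
    finally show ?thesis by simp
  qed
  have nl: "genuinely_3q_nonlocal \<rho>'"
    unfolding genuinely_3q_nonlocal_def
  proof (intro exI conjI)
    show "qubit_povms {0,1} {0,1} E1" unfolding E1_def by (rule Emat_povm) (rule cmod_wA[OF u1])
    show "qubit_povms {0,1} {0,1} E2" unfolding E2_def by (rule Emat_povm) (rule cmod_beta)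
    show "qubit_povms {0,1} {0,1} E2" by fact
    show "\<not> svetlichny_local {0,1} {0,1} {0,1} {0,1} {0,1} {0,1} (qcorr \<rho>' E1 E2 E2)"
      using local_bound qv gt by fastforce
  qed simp_all
  show ?thesis using Kp_incoh nl unfolding \<rho>'_def by blast
qed

end
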